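(* Let $\mathcal{R}$ be a cell space, let $m\in M$ and let $\mathfrak{g}\in G/G_0$. There is an element $g\in\mathfrak{g}$ such that for every $\mathfrak{g}'\in G/G_0$ we have $(m\triangleleft\mathfrak{g})\triangleleft\mathfrak{g}'=m\triangleleft g\cdot\mathfrak{g}'$; in particular, for this $g$, $(m\triangleleft\mathfrak{g})\triangleleft g^{-1}G_0=m$.
   Context: A cell space $\mathcal{R}$ consists of a group $G$ acting transitively on the left on a nonempty set $M$ via $\triangleright$, a point $m_0\in M$ and a family $(g_{m_0,m})_{m\in M}$ in $G$ with $g_{m_0,m}\triangleright m_0=m$. $G_0$ is the stabiliser of $m_0$, $G/G_0$ the set of left cosets (elements are subsets of $G$), with $G$ acting by $g\cdot hG_0=ghG_0$. The right semi-action $\triangleleft\colon M\times G/G_0\to M$ is $m\triangleleft gG_0=g_{m_0,m}g\triangleright m_0$. *)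

theory Defs
  imports "HOL-Algebra.Coset"
begin

definition cell_space ::
  "('g, 'b) monoid_scheme \<Rightarrow> 'm set \<Rightarrow> ('g \<Rightarrow> 'm \<Rightarrow> 'm) \<Rightarrow> 'm \<Rightarrow> ('m \<Rightarrow> 'g) \<Rightarrow> bool" where
  "cell_space G M act m0 gfam \<longleftrightarrow>
     group G \<and> M \<noteq> {} \<and>
     (\<forall>g\<in>carrier G. \<forall>m\<in>M. act g m \<in> M) \<and>
     (\<forall>m\<in>M. act \<one>\<^bsub>G\<^esub> m = m) \<and>
     (\<forall>g\<in>carrier G. \<forall>h\<in>carrier G. \<forall>m\<in>M. act (g \<otimes>\<^bsub>G\<^esub> h) m = act g (act h m)) \<and>
     (\<forall>m\<in>M. \<forall>m'\<in>M. \<exists>g\<in>carrier G. act g m = m') \<and>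
     m0 \<in> M \<and>
     (\<forall>m\<in>M. gfam m \<in> carrier G \<and> act (gfam m) m0 = m)"

definition stab :: "('g, 'b) monoid_scheme \<Rightarrow> ('g \<Rightarrow> 'm \<Rightarrow> 'm) \<Rightarrow> 'm \<Rightarrow> 'g set" where
  "stab G act m0 = {g \<in> carrier G. act g m0 = m0}"

definition lcosets :: "('g, 'b) monoid_scheme \<Rightarrow> 'g set \<Rightarrow> 'g set set" where
  "lcosets G H = (\<Union>g\<in>carrier G. {g <#\<^bsub>G\<^esub> H})"

text \<open>Right semi-action: m \<triangleleft> gG_0 = (gfam m \<otimes> g) act m0, for any representative g.\<close>
definition rsa :: "('g, 'b) monoid_scheme \<Rightarrow> ('g \<Rightarrow> 'm \<Rightarrow> 'm) \<Rightarrow> 'm \<Rightarrow> ('m \<Rightarrow> 'g)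
    \<Rightarrow> 'm \<Rightarrow> 'g set \<Rightarrow> 'm" where
  "rsa G act m0 gfam m C = act (gfam m \<otimes>\<^bsub>G\<^esub> (SOME g. g \<in> C)) m0"

end

theory Submission
  imports Defs
begin

lemma rep_lemma:
  fixes G :: "('g, 'b) monoid_scheme" (structure)
  assumes cs: "cell_space G M act m0 gfam"
    and a: "a \<in> carrier G" and b: "b \<in> carrier G"
    and x: "x \<in> a <#\<^bsub>G\<^esub> stab G act m0"
  shows "act (b \<otimes>\<^bsub>G\<^esub> x) m0 = act (b \<otimes>\<^bsub>G\<^esub> a) m0"
proof -
  interpret group G using cs unfolding cell_space_def by blast
  obtain h where h: "h \<in> carrier G" "act h m0 = m0" "x = a \<otimes> h"
    using x unfolding l_coset_def stab_def by auto
  have "act (b \<otimes> x) m0 = act ((b \<otimes> a) \<otimes> h) m0" using h a b by (simp add: m_assoc)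
  also have "\<dots> = act (b \<otimes> a) (act h m0)" using cs h a b unfolding cell_space_def by auto
  finally show ?thesis using h by simp
qed

lemma some_in:
  fixes G :: "('g, 'b) monoid_scheme" (structure)
  assumes cs: "cell_space G M act m0 gfam" and a: "a \<in> carrier G"
  shows "(SOME x. x \<in> a <#\<^bsub>G\<^esub> stab G act m0) \<in> a <#\<^bsub>G\<^esub> stab G act m0"
proof -
  interpret group G using cs unfolding cell_space_def by blast
  have "\<one> \<in> stab G act m0" using cs unfolding cell_space_def stab_def by auto
  hence "a \<otimes> \<one> \<in> a <# stab G act m0" unfolding l_coset_def by auto
  thus ?thesis by (rule someI)
qed

lemma rsa_coset:
  fixes G :: "('g, 'b) monoid_scheme" (structure)
  assumes cs: "cell_space G M act m0 gfam" and a: "a \<in> carrier G" and m: "m \<in> M"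
  shows "rsa G act m0 gfam m (a <#\<^bsub>G\<^esub> stab G act m0) = act (gfam m \<otimes>\<^bsub>G\<^esub> a) m0"
  unfolding rsa_def
  using rep_lemma[OF cs a _ some_in[OF cs a]] cs m unfolding cell_space_def by blast

theorem lemma4:
  fixes G :: "('g, 'b) monoid_scheme" and M :: "'m set" and act :: "'g \<Rightarrow> 'm \<Rightarrow> 'm"
    and m0 :: 'm and gfam :: "'m \<Rightarrow> 'g"
  assumes "cell_space G M act m0 gfam"
    and "m \<in> M"
    and "C \<in> lcosets G (stab G act m0)"
  shows "\<exists>g\<in>C.
    (\<forall>C'\<in>lcosets G (stab G act m0).
        rsa G act m0 gfam (rsa G act m0 gfam m C) C' = rsa G act m0 gfam m (g <#\<^bsub>G\<^esub> C')) \<and>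
    rsa G act m0 gfam (rsa G act m0 gfam m C) (inv\<^bsub>G\<^esub> g <#\<^bsub>G\<^esub> stab G act m0) = m"
proof -
  note cs = assms(1)
  interpret group G using cs unfolding cell_space_def by blast
  let ?H = "stab G act m0"
  have Hc: "?H \<subseteq> carrier G" unfolding stab_def by auto
  have act_mult: "\<And>x y n. x \<in> carrier G \<Longrightarrow> y \<in> carrier G \<Longrightarrow> n \<in> M \<Longrightarrow> act (x \<otimes>\<^bsub>G\<^esub> y) n = act x (act y n)"
    using cs unfolding cell_space_def by blast
  have act_M: "\<And>x n. x \<in> carrier G \<Longrightarrow> n \<in> M \<Longrightarrow> act x n \<in> M"
    using cs unfolding cell_space_def by blast
  have m0M: "m0 \<in> M" and gf: "\<And>n. n \<in> M \<Longrightarrow> gfam n \<in> carrier G \<and> act (gfam n) m0 = n"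
    using cs unfolding cell_space_def by auto
  obtain c where c: "c \<in> carrier G" "C = c <#\<^bsub>G\<^esub> ?H" using assms(3) unfolding lcosets_def by auto
  define f where "f = gfam m"
  have f: "f \<in> carrier G" "act f m0 = m" using gf[OF assms(2)] f_def by auto
  define m' where "m' = rsa G act m0 gfam m C"
  have m'eq: "m' = act (f \<otimes>\<^bsub>G\<^esub> c) m0" unfolding m'_def c(2) f_def by (rule rsa_coset[OF cs c(1) assms(2)])
  have m'M: "m' \<in> M" using m'eq f c act_M m0M by simp
  define f' where "f' = gfam m'"
  have f': "f' \<in> carrier G" "act f' m0 = m'" using gf[OF m'M] f'_def by auto
  define g where "g = inv\<^bsub>G\<^esub> f \<otimes>\<^bsub>G\<^esub> f'"
  have gc: "g \<in> carrier G" using f f' g_def by simp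
  have fg: "f \<otimes>\<^bsub>G\<^esub> g = f'" using f f' g_def by (simp add: m_assoc[symmetric])
  have "act (inv\<^bsub>G\<^esub> c \<otimes>\<^bsub>G\<^esub> g) m0 = act (inv\<^bsub>G\<^esub> c \<otimes>\<^bsub>G\<^esub> inv\<^bsub>G\<^esub> f) (act f' m0)"
    using act_mult f f' c m0M m'M g_def by (simp add: m_assoc)
  also have "\<dots> = act (inv\<^bsub>G\<^esub> c \<otimes>\<^bsub>G\<^esub> inv\<^bsub>G\<^esub> f) (act (f \<otimes>\<^bsub>G\<^esub> c) m0)" using f' m'eq by simp
  also have "\<dots> = act ((inv\<^bsub>G\<^esub> c \<otimes>\<^bsub>G\<^esub> inv\<^bsub>G\<^esub> f) \<otimes>\<^bsub>G\<^esub> (f \<otimes>\<^bsub>G\<^esub> c)) m0" using act_mult f c m0M by simp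
  also have "(inv\<^bsub>G\<^esub> c \<otimes>\<^bsub>G\<^esub> inv\<^bsub>G\<^esub> f) \<otimes>\<^bsub>G\<^esub> (f \<otimes>\<^bsub>G\<^esub> c) = \<one>\<^bsub>G\<^esub>" using f c
    by (metis inv_closed inv_mult_group l_inv m_closed)
  also have "act \<one>\<^bsub>G\<^esub> m0 = m0" using cs m0M unfolding cell_space_def by blast
  finally have hst: "inv\<^bsub>G\<^esub> c \<otimes>\<^bsub>G\<^esub> g \<in> ?H" unfolding stab_def using c gc by simp
  have "g = c \<otimes>\<^bsub>G\<^esub> (inv\<^bsub>G\<^esub> c \<otimes>\<^bsub>G\<^esub> g)" using c gc by (simp add: m_assoc[symmetric])
  hence gC: "g \<in> C" using hst c unfolding l_coset_def by auto
  have part1: "\<forall>C'\<in>lcosets G ?H. rsa G act m0 gfam m' C' = rsa G act m0 gfam m (g <#\<^bsub>G\<^esub> C')"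
  proof
    fix C' assume "C' \<in> lcosets G ?H"
    then obtain k where k: "k \<in> carrier G" "C' = k <#\<^bsub>G\<^esub> ?H" unfolding lcosets_def by auto
    have "rsa G act m0 gfam m' C' = act (f' \<otimes>\<^bsub>G\<^esub> k) m0"
      unfolding k(2) f'_def by (rule rsa_coset[OF cs k(1) m'M])
    moreover have "g <#\<^bsub>G\<^esub> C' = (g \<otimes>\<^bsub>G\<^esub> k) <#\<^bsub>G\<^esub> ?H" using k gc Hc by (simp add: lcos_m_assoc)
    moreover have "rsa G act m0 gfam m ((g \<otimes>\<^bsub>G\<^esub> k) <#\<^bsub>G\<^esub> ?H) = act (f \<otimes>\<^bsub>G\<^esub> (g \<otimes>\<^bsub>G\<^esub> k)) m0"
      unfolding f_def using rsa_coset[OF cs _ assms(2)] gc k by simp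
    moreover have "f \<otimes>\<^bsub>G\<^esub> (g \<otimes>\<^bsub>G\<^esub> k) = f' \<otimes>\<^bsub>G\<^esub> k" using fg f gc k by (simp add: m_assoc[symmetric])
    ultimately show "rsa G act m0 gfam m' C' = rsa G act m0 gfam m (g <#\<^bsub>G\<^esub> C')" by simp
  qed
  have ig: "inv\<^bsub>G\<^esub> g <#\<^bsub>G\<^esub> ?H \<in> lcosets G ?H" unfolding lcosets_def using gc by auto
  have "g <#\<^bsub>G\<^esub> (inv\<^bsub>G\<^esub> g <#\<^bsub>G\<^esub> ?H) = (g \<otimes>\<^bsub>G\<^esub> inv\<^bsub>G\<^esub> g) <#\<^bsub>G\<^esub> ?H" using gc Hc by (simp add: lcos_m_assoc)
  hence "rsa G act m0 gfam m (g <#\<^bsub>G\<^esub> (inv\<^bsub>G\<^esub> g <#\<^bsub>G\<^esub> ?H)) = act (f \<otimes>\<^bsub>G\<^esub> \<one>\<^bsub>G\<^esub>) m0"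
    unfolding f_def using rsa_coset[OF cs _ assms(2)] gc by simp
  hence "rsa G act m0 gfam m' (inv\<^bsub>G\<^esub> g <#\<^bsub>G\<^esub> ?H) = m" using part1 ig f by simp
  thus ?thesis using gC part1 unfolding m'_def by blast
qed

end
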